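(* Let $\Lambda\subset H^0(\mathbb{P}^r,\mathcal{O}_{\mathbb{P}^r}(2))$ be a linear system of quadrics with $\dim\Lambda=\alpha+1$, let $\Phi:\mathbb{P}^r\dashrightarrow\mathbb{P}^\alpha$ be the associated rational map, and let $X$ be the base scheme of $\Lambda$. A line $L\subset\mathbb{P}^r$ with $L\cap X=\emptyset$ is such that $\Phi_{|L}:L\to\Phi(L)$ is a double covering of a line if and only if $L$ is a secant line (possibly a tangent line) to a non-linear fibre of $\Phi$.
   Context: Over $\mathbb{C}$. The fibre of $\Phi$ through a point $P\in\mathbb{P}^r\setminus X$ means $\overline{\Phi^{-1}(\Phi(P))}$, the Zariski closure; it is non-linear if it is not a linear subspace. Secant lines include tangent lines (limits with the two points coinciding). *)

theory Defs
  imports "HOL-Analysis.Analysis"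
begin

text \<open>P^r is modelled by the nonzero vectors of complex^'n (CARD('n) = r+1),
  a projective point being the complex line (1-dim span) of such a vector; subsets of P^r are
  modelled as cones of nonzero vectors. P^alpha likewise with complex^'m (CARD('m) = alpha+1).\<close>

definition hom_poly :: "nat \<Rightarrow> (complex^'n \<Rightarrow> complex) \<Rightarrow> bool" where
  "hom_poly d f \<longleftrightarrow> (\<exists>S c. finite S \<and> (\<forall>e\<in>S. (\<Sum>i\<in>UNIV. e i) = d) \<and>
      (\<forall>x. f x = (\<Sum>e\<in>S. c e * (\<Prod>i\<in>UNIV. (x $ i) ^ (e i)))))"

definition zariski_closed :: "(complex^'n) set \<Rightarrow> bool" where
  "zariski_closed Z \<longleftrightarrow> (\<exists>F. (\<forall>f\<in>F. \<exists>d. hom_poly d f) \<and>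
      Z = {x. x \<noteq> 0 \<and> (\<forall>f\<in>F. f x = 0)})"

definition zariski_closure :: "(complex^'n) set \<Rightarrow> (complex^'n) set" where
  "zariski_closure S = \<Inter>{Z. zariski_closed Z \<and> S \<subseteq> Z}"

definition proj_line :: "('a::field^'k) set \<Rightarrow> bool" where
  "proj_line W \<longleftrightarrow> vec.subspace W \<and> vec.dim W = 2"

definition linear_cone :: "('a::field^'k) set \<Rightarrow> bool" where
  "linear_cone F \<longleftrightarrow> vec.subspace (insert 0 F)"

text \<open>Secant lines (including tangent lines as limits) to F: L is a limit, in the Grassmannian,
  of lines joining two distinct points of F. Convergence of lines span{p_k,q_k} to span{u,v} is
  expressed by bases a_k, b_k of span{p_k,q_k} converging to a basis u, v of L.\<close>
definition secant_line :: "(complex^'n) set \<Rightarrow> (complex^'n) set \<Rightarrow> bool" where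
  "secant_line F L \<longleftrightarrow> (\<exists>u v p q a b.
      L = vec.span {u, v} \<and> vec.dim L = 2 \<and>
      (\<forall>k::nat. p k \<in> F \<and> q k \<in> F \<and> vec.dim (vec.span {p k, q k}) = 2 \<and>
               a k \<in> vec.span {p k, q k} \<and> b k \<in> vec.span {p k, q k}) \<and>
      a \<longlonglongrightarrow> u \<and> b \<longlonglongrightarrow> v)"

definition Phi :: "('m::finite \<Rightarrow> complex^'n \<Rightarrow> complex) \<Rightarrow> complex^'n \<Rightarrow> complex^'m" where
  "Phi q x = (\<chi> i. q i x)"

definition base_locus :: "('m::finite \<Rightarrow> complex^'n \<Rightarrow> complex) \<Rightarrow> (complex^'n) set" where
  "base_locus q = {x. x \<noteq> 0 \<and> (\<forall>i. q i x = 0)}"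

definition fibre :: "('m::finite \<Rightarrow> complex^'n \<Rightarrow> complex) \<Rightarrow> complex^'n \<Rightarrow> (complex^'n) set" where
  "fibre q P = zariski_closure
      {Q. Q \<noteq> 0 \<and> Q \<notin> base_locus q \<and> vec.span {Phi q Q} = vec.span {Phi q P}}"

text \<open>Phi restricted to the line L (with L disjoint from X) is a double covering of a line:
  the image Phi(L) is a line of P^alpha and all but finitely many points of Phi(L) have
  exactly two preimages in L (finite morphism of degree 2 between curves).\<close>
definition double_cover_of_line ::
  "('m::finite \<Rightarrow> complex^'n \<Rightarrow> complex) \<Rightarrow> (complex^'n) set \<Rightarrow> bool" where
  "double_cover_of_line q L \<longleftrightarrow>
     (let img = {vec.span {Phi q x} | x. x \<in> L \<and> x \<noteq> 0} in
      (\<exists>W. proj_line W \<and> img = {vec.span {y} | y. y \<in> W \<and> y \<noteq> 0}) \<and>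
      finite {y \<in> img. card {vec.span {x} | x. x \<in> L \<and> x \<noteq> 0 \<and> vec.span {Phi q x} = y} \<noteq> 2})"

end

theory Submission
  imports Defs
begin



lemma span1: "vec.span {x::'a::field^'k} = {c *s x | c. True}"
  by (auto simp: vec.span_singleton)

lemma span2: "vec.span {u::'a::field^'k, v} = {s *s u + t *s v | s t. True}"
proof (rule set_eqI, rule iffI)
  fix x assume "x \<in> vec.span {u, v}"
  then obtain k where "x - k *s u \<in> vec.span {v}" using vec.span_insert by blast
  then obtain c where "x - k *s u = c *s v" by (auto simp: span1)
  hence "x = k *s u + c *s v" by (simp add: algebra_simps)
  thus "x \<in> {s *s u + t *s v | s t. True}" by blast
next
  fix x assume "x \<in> {s *s u + t *s v | s t. True}"
  then obtain s t where "x = s *s u + t *s v" by blast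
  thus "x \<in> vec.span {u, v}"
    by (simp, intro vec.span_add vec.span_scale vec.span_base) auto
qed

definition indep2 :: "'a::field^'k \<Rightarrow> 'a^'k \<Rightarrow> bool" where
  "indep2 x y \<longleftrightarrow> (\<forall>a b. a *s x + b *s y = 0 \<longrightarrow> a = 0 \<and> b = 0)"

lemma indep2D: "indep2 x y \<Longrightarrow> a *s x + b *s y = 0 \<Longrightarrow> a = 0 \<and> b = 0"
  unfolding indep2_def by blast

lemma indep2_vec: assumes "indep2 x y" shows "vec.independent {x, y}" "x \<noteq> y"
proof -
  show xy: "x \<noteq> y"
  proof
    assume "x = y" then have "1 *s x + (-1) *s y = 0" by (simp add: vec_eq_iff)
    from indep2D[OF assms this] show False by simp
  qed
  have y0: "y \<noteq> 0"
  proof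
    assume "y = 0" hence "0 *s x + 1 *s y = 0" by simp
    from indep2D[OF assms this] show False by simp
  qed
  have "x \<notin> vec.span {y}"
  proof
    assume "x \<in> vec.span {y}"
    then obtain c where "x = c *s y" by (auto simp: span1)
    hence "1 *s x + (- c) *s y = 0" by (simp add: vec_eq_iff)
    from indep2D[OF assms this] show False by simp
  qed
  thus "vec.independent {x, y}" using y0 xy by (simp add: vec.independent_insert)
qed

lemma indep2_dim: assumes "indep2 x y" shows "vec.dim (vec.span {x, y}) = 2"
  using indep2_vec[OF assms] by (simp add: vec.dim_eq_card_independent)

lemma lin_dep_coef: fixes x y :: "'a::field^'k" assumes h': "\<And>i. a * x$i + b * y$i = 0" and "a \<noteq> 0" shows "x = (- b / a) *s y"
proof -
  have "a * x$i = - (b * y$i)" for i using h'[of i] by (simp add: eq_neg_iff_add_eq_0 )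
  thus ?thesis using assms by (simp add: vec_eq_iff field_simps)
qed

lemma dim_le1: fixes x y :: "'a::field^'k" assumes e: "x = c *s y" shows "vec.dim (vec.span {x, y}) \<le> 1"
proof -
  have "x \<in> vec.span {y}" unfolding e by (intro vec.span_scale vec.span_base) simp
  hence "vec.span {x, y} = vec.span {y}" by (rule vec.span_redundant)
  hence "vec.dim (vec.span {x, y}) = vec.dim (vec.span {y})" by (rule arg_cong)
  also have "\<dots> = vec.dim {y}" by (rule vec.dim_span)
  also have "\<dots> \<le> card {y}" by (rule vec.dim_le_card') simp
  finally show ?thesis by simp
qed

lemma dim2_indep2: assumes d: "vec.dim (vec.span {x::'a::field^'k, y}) = 2" shows "indep2 x y"
  unfolding indep2_def
proof (intro allI impI)
  fix a b assume h: "a *s x + b *s y = 0"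
  hence h': "\<And>i. a * x$i + b * y$i = 0" by (simp add: vec_eq_iff)
  hence h'': "\<And>i. b * y$i + a * x$i = 0" by (simp add: add.commute)
  have "\<not> a \<noteq> 0"
  proof
    assume "a \<noteq> 0"
    from dim_le1[OF lin_dep_coef[OF h' this]] d show False by linarith
  qed
  moreover have "\<not> b \<noteq> 0"
  proof
    assume b0: "b \<noteq> 0"
    have "{y, x} = {x, y}" by blast
    with dim_le1[OF lin_dep_coef[OF h'' b0]] d show False by simp
  qed
  ultimately show "a = 0 \<and> b = 0" by blast
qed



lemma hom_scale: assumes "hom_poly d f" shows "f (c *s x) = c^d * f x"
proof -
  obtain S cf where S: "finite S" "\<forall>e\<in>S. (\<Sum>i\<in>UNIV. e i) = d"
    "\<forall>x. f x = (\<Sum>e\<in>S. cf e * (\<Prod>i\<in>UNIV. (x $ i) ^ (e i)))"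
    using assms unfolding hom_poly_def by blast
  have m: "(\<Prod>i\<in>UNIV. ((c *s x) $ i) ^ (e i)) = c^d * (\<Prod>i\<in>UNIV. (x $ i) ^ (e i))" if "e \<in> S" for e
  proof -
    have "(\<Prod>i\<in>UNIV. ((c *s x) $ i) ^ (e i)) = (\<Prod>i\<in>UNIV. c ^ e i * (x $ i) ^ (e i))"
      by (simp add: power_mult_distrib)
    also have "\<dots> = (\<Prod>i\<in>UNIV. c ^ e i) * (\<Prod>i\<in>UNIV. (x $ i) ^ (e i))" by (rule prod.distrib)
    also have "(\<Prod>i\<in>UNIV. c ^ e i) = c ^ (\<Sum>i\<in>UNIV. e i)" by (simp add: power_sum)
    finally show ?thesis using S(2) that by simp
  qed
  have "f (c *s x) = (\<Sum>e\<in>S. cf e * (c^d * (\<Prod>i\<in>UNIV. (x $ i) ^ (e i))))"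
    using S(3) m by simp
  also have "\<dots> = c^d * f x" using S(3) by (simp add: sum_distrib_left algebra_simps)
  finally show ?thesis .
qed

lemma hom_line_poly: fixes f :: "complex^'n \<Rightarrow> complex" assumes "hom_poly d f"
  shows "\<exists>p. degree p \<le> d \<and> (\<forall>z. f (x + z *s y) = poly p z)"
proof -
  obtain S cf where S: "finite S" "\<forall>e\<in>S. (\<Sum>i\<in>UNIV. e i) = d"
    "\<forall>x. f x = (\<Sum>e\<in>S. cf e * (\<Prod>i\<in>UNIV. (x $ i) ^ (e i)))"
    using assms unfolding hom_poly_def by blast
  define p where "p = (\<Sum>e\<in>S. smult (cf e) (\<Prod>i\<in>UNIV. [:x $ i, y $ i:] ^ (e i)))"
  have "degree p \<le> d" unfolding p_def
  proof (rule degree_sum_le[OF S(1)])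
    fix e assume e: "e \<in> S"
    have "degree (\<Prod>i\<in>UNIV. [:x $ i, y $ i:] ^ (e i)) \<le> (\<Sum>i\<in>UNIV. degree ([:x $ i, y $ i:] ^ (e i)))"
      using degree_prod_sum_le[of UNIV "\<lambda>i. [:x $ i, y $ i:] ^ (e i)"] by (simp add: o_def)
    also have "\<dots> \<le> (\<Sum>i\<in>UNIV. e i)"
    proof (rule sum_mono)
      fix i
      have "degree ([:x $ i, y $ i:] ^ (e i)) \<le> degree [:x $ i, y $ i:] * e i" by (rule degree_power_le)
      also have "\<dots> \<le> 1 * e i" by (intro mult_right_mono) auto
      finally show "degree ([:x $ i, y $ i:] ^ (e i)) \<le> e i" by simp
    qed
    finally show "degree (smult (cf e) (\<Prod>i\<in>UNIV. [:x $ i, y $ i:] ^ (e i))) \<le> d"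
      using S(2) e degree_smult_le order_trans by metis
  qed
  moreover have "f (x + z *s y) = poly p z" for z
    unfolding p_def by (simp add: S(3) poly_sum poly_prod algebra_simps)
  ultimately show ?thesis by blast
qed

lemma poly2: fixes p :: "complex poly" assumes "degree p \<le> 2"
  shows "poly p z = coeff p 0 + coeff p 1 * z + coeff p 2 * z^2"
proof -
  have "poly p z = (\<Sum>i\<le>degree p. coeff p i * z ^ i)" by (rule poly_altdef)
  also have "\<dots> = (\<Sum>i\<le>2. coeff p i * z ^ i)"
    by (rule sum.mono_neutral_left) (use assms in \<open>auto simp: coeff_eq_0\<close>)
  also have "\<dots> = coeff p 0 + coeff p 1 * z + coeff p 2 * z^2"
    by (simp add: eval_nat_numeral atMost_Suc)
  finally show ?thesis .
qed

lemma quad_id: fixes f :: "complex^'n \<Rightarrow> complex" assumes hf: "hom_poly 2 f"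
  shows "f (s *s u + t *s v) = s^2 * f u + s * t * (f (u + v) - f u - f v) + t^2 * f v"
proof -
  obtain p where p: "degree p \<le> 2" "\<And>z. f (u + z *s v) = poly p z"
    using hom_line_poly[OF hf, of u v] by blast
  obtain p' where p': "degree p' \<le> 2" "\<And>z. f (v + z *s u) = poly p' z"
    using hom_line_poly[OF hf, of v u] by blast
  define c0 c1 c2 where "c0 = coeff p 0" "c1 = coeff p 1" "c2 = coeff p 2"
  define d0 d1 d2 where "d0 = coeff p' 0" "d1 = coeff p' 1" "d2 = coeff p' 2"
  have hp: "\<And>z. f (u + z *s v) = c0 + c1 * z + c2 * z^2" using p poly2 c0_c1_c2_def by simp
  have hp': "\<And>z. f (v + z *s u) = d0 + d1 * z + d2 * z^2" using p' poly2 d0_d1_d2_def by simp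
  have fu: "f u = c0" using hp[of 0] by simp
  have fv: "f v = d0" using hp'[of 0] by simp
  have key: "c0 + c1 * z + c2 * z^2 = d0 * z^2 + d1 * z + d2" if z: "z \<noteq> 0" for z
  proof -
    have e: "u + z *s v = z *s (v + (1/z) *s u)" using z by (simp add: vec_eq_iff algebra_simps)
    have "f (u + z *s v) = z^2 * f (v + (1/z) *s u)" unfolding e by (rule hom_scale[OF hf])
    hence "c0 + c1 * z + c2 * z^2 = z^2 * (d0 + d1 * (1/z) + d2 * (1/z)^2)" using hp hp' by simp
    moreover have "z^2 * (d0 + d1 * (1/z) + d2 * (1/z)^2) = d0 * z^2 + d1 * z + d2"
      using z by (simp add: algebra_simps power2_eq_square)
    ultimately show ?thesis by simp
  qed
  have k1: "c0 + c1 + c2 = d0 + d1 + d2" using key[of 1] by simp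
  have k2: "c0 - c1 + c2 = d0 - d1 + d2" using key[of "-1"] by simp
  have k3: "c0 + 2 * c1 + 4 * c2 = 4 * d0 + 2 * d1 + d2" using key[of 2] by (simp add: mult.commute)
  have c2: "c2 = d0"
  proof -
    have "(c0 + c1 + c2) - (c0 - c1 + c2) = (d0 + d1 + d2) - (d0 - d1 + d2)" using k1 k2 by simp
    hence e1: "c1 = d1" by (simp add: algebra_simps)
    have "(c0 + 2 * c1 + 4 * c2) - (c0 + c1 + c2) = (4 * d0 + 2 * d1 + d2) - (d0 + d1 + d2)" using k1 k3 by simp
    hence "c1 + 3 * c2 = 3 * d0 + d1" by (simp add: algebra_simps)
    thus ?thesis using e1 by simp
  qed
  have main: "f (s *s u + t *s v) = s^2 * c0 + s * t * c1 + t^2 * c2" for s t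
  proof (cases "s = 0")
    case True
    thus ?thesis using hom_scale[OF hf, of t v] fv c2 by (simp add: power2_eq_square)
  next
    case False
    have e: "s *s u + t *s v = s *s (u + (t/s) *s v)" using False by (simp add: vec_eq_iff algebra_simps)
    have "f (s *s u + t *s v) = s^2 * f (u + (t/s) *s v)" unfolding e by (rule hom_scale[OF hf])
    hence "f (s *s u + t *s v) = s^2 * (c0 + c1 * (t/s) + c2 * (t/s)^2)" using hp by simp
    moreover have "s^2 * (c0 + c1 * (t/s) + c2 * (t/s)^2) = s^2 * c0 + s * t * c1 + t^2 * c2"
      using False by (simp add: algebra_simps power2_eq_square)
    ultimately show ?thesis by simp
  qed
  have "f (u + v) = c0 + c1 + c2" using main[of 1 1] by simp
  thus ?thesis using main[of s t] fu fv c2 by simp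
qed



lemma hom_lin: assumes f: "hom_poly d f" and g: "hom_poly d g"
  shows "hom_poly d (\<lambda>x. a * f x + b * g x)"
proof -
  obtain S1 c1 where S1: "finite S1" "\<forall>e\<in>S1. (\<Sum>i\<in>UNIV. e i) = d"
    "\<forall>x. f x = (\<Sum>e\<in>S1. c1 e * (\<Prod>i\<in>UNIV. (x $ i) ^ (e i)))"
    using f unfolding hom_poly_def by blast
  obtain S2 c2 where S2: "finite S2" "\<forall>e\<in>S2. (\<Sum>i\<in>UNIV. e i) = d"
    "\<forall>x. g x = (\<Sum>e\<in>S2. c2 e * (\<Prod>i\<in>UNIV. (x $ i) ^ (e i)))"
    using g unfolding hom_poly_def by blast
  define c where "c e = (if e \<in> S1 then a * c1 e else 0) + (if e \<in> S2 then b * c2 e else 0)" for e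
  have "a * f x + b * g x = (\<Sum>e\<in>S1 \<union> S2. c e * (\<Prod>i\<in>UNIV. (x $ i) ^ (e i)))" for x
  proof -
    let ?m = "\<lambda>e. (\<Prod>i\<in>UNIV. (x $ i) ^ (e i))"
    have "(\<Sum>e\<in>S1 \<union> S2. c e * ?m e) = (\<Sum>e\<in>S1 \<union> S2. (if e \<in> S1 then a * c1 e * ?m e else 0))
        + (\<Sum>e\<in>S1 \<union> S2. (if e \<in> S2 then b * c2 e * ?m e else 0))"
      unfolding sum.distrib[symmetric] by (rule sum.cong) (auto simp: c_def distrib_right)
    also have "(\<Sum>e\<in>S1 \<union> S2. (if e \<in> S1 then a * c1 e * ?m e else 0)) = (\<Sum>e\<in>S1. a * c1 e * ?m e)"
      using S1(1) S2(1) by (simp add: sum.If_cases Int_absorb1)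
    also have "(\<Sum>e\<in>S1 \<union> S2. (if e \<in> S2 then b * c2 e * ?m e else 0)) = (\<Sum>e\<in>S2. b * c2 e * ?m e)"
      using S1(1) S2(1) by (simp add: sum.If_cases Int_absorb1)
    finally show ?thesis using S1(3) S2(3) by (simp add: sum_distrib_left mult.assoc)
  qed
  moreover have "finite (S1 \<union> S2)" using S1 S2 by simp
  moreover have "\<forall>e\<in>S1 \<union> S2. (\<Sum>i\<in>UNIV. e i) = d" using S1 S2 by blast
  ultimately show ?thesis unfolding hom_poly_def by blast
qed

lemma hom_tendsto: assumes f: "hom_poly d f" and a: "a \<longlonglongrightarrow> u"
  shows "(\<lambda>k. f (a k)) \<longlonglongrightarrow> f u"
proof -
  obtain S c where S: "finite S" "\<forall>e\<in>S. (\<Sum>i\<in>UNIV. e i) = d"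
    "\<forall>x. f x = (\<Sum>e\<in>S. c e * (\<Prod>i\<in>UNIV. (x $ i) ^ (e i)))"
    using f unfolding hom_poly_def by blast
  show ?thesis unfolding S(3)[rule_format]
    by (intro tendsto_intros a)
qed

definition dep3 :: "complex^'m \<Rightarrow> complex^'m \<Rightarrow> complex^'m \<Rightarrow> bool" where
  "dep3 x y z \<longleftrightarrow> (\<exists>a b c. (a, b, c) \<noteq> (0, 0, 0) \<and> a *s x + b *s y + c *s z = 0)"

lemma dep3_limit:
  assumes d: "\<And>k. dep3 (X k) (Y k) (Z k)" and X: "X \<longlonglongrightarrow> x" and Y: "Y \<longlonglongrightarrow> y" and Z: "Z \<longlonglongrightarrow> z"
  shows "dep3 x y z"
proof -
  have "\<exists>w::complex\<times>complex\<times>complex. norm w = 1 \<and> fst w *s X k + fst (snd w) *s Y k + snd (snd w) *s Z k = 0" for k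
  proof -
    obtain a b c where abc: "(a, b, c) \<noteq> (0, 0, 0)" "a *s X k + b *s Y k + c *s Z k = 0"
      using d[of k] unfolding dep3_def by blast
    define r where "r = norm (a, b, c)"
    have r0: "r \<noteq> 0" using abc(1) unfolding r_def by (simp add: zero_prod_def)
    define w where "w = scaleR (1 / r) (a, b, c)"
    have "norm w = \<bar>1 / r\<bar> * r" unfolding w_def norm_scaleR r_def ..
    also have "\<dots> = 1" using r0 norm_ge_zero[of "(a, b, c)"] unfolding r_def[symmetric] by simp
    finally have "norm w = 1" .
    moreover have "fst w *s X k + fst (snd w) *s Y k + snd (snd w) *s Z k
        = complex_of_real (1 / r) *s (a *s X k + b *s Y k + c *s Z k)"
      unfolding w_def by (simp add: vec_eq_iff scaleR_conv_of_real algebra_simps)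
    ultimately show ?thesis using abc(2) by (intro exI[of _ w]) simp
  qed
  then obtain w where w: "\<And>k. norm (w k) = 1"
    "\<And>k. fst (w k) *s X k + fst (snd (w k)) *s Y k + snd (snd (w k)) *s Z k = 0"
    by metis
  have "seq_compact (sphere (0::complex\<times>complex\<times>complex) 1)"
    by (rule compact_imp_seq_compact) simp
  moreover have "\<forall>k. w k \<in> sphere 0 1" using w(1) by simp
  ultimately obtain l r where l: "l \<in> sphere 0 1" "strict_mono r" "(w \<circ> r) \<longlonglongrightarrow> l"
    unfolding seq_compact_def by blast
  have eq: "fst l *s x + fst (snd l) *s y + snd (snd l) *s z = 0"
  proof (subst vec_eq_iff, intro allI)
    fix i
    have "(\<lambda>k. fst ((w \<circ> r) k) * ((X \<circ> r) k) $ i + fst (snd ((w \<circ> r) k)) * ((Y \<circ> r) k) $ i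
        + snd (snd ((w \<circ> r) k)) * ((Z \<circ> r) k) $ i) \<longlonglongrightarrow> fst l * x $ i + fst (snd l) * y $ i + snd (snd l) * z $ i"
      by (intro tendsto_intros l(3) LIMSEQ_subseq_LIMSEQ[OF X l(2)] LIMSEQ_subseq_LIMSEQ[OF Y l(2)] LIMSEQ_subseq_LIMSEQ[OF Z l(2)])
    moreover have "(\<lambda>k. fst ((w \<circ> r) k) * ((X \<circ> r) k) $ i + fst (snd ((w \<circ> r) k)) * ((Y \<circ> r) k) $ i
        + snd (snd ((w \<circ> r) k)) * ((Z \<circ> r) k) $ i) = (\<lambda>k. 0)"
    proof
      fix k
      have "(fst (w (r k)) *s X (r k) + fst (snd (w (r k))) *s Y (r k) + snd (snd (w (r k))) *s Z (r k)) $ i = 0"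
        using w(2)[of "r k"] by simp
      thus "fst ((w \<circ> r) k) * ((X \<circ> r) k) $ i + fst (snd ((w \<circ> r) k)) * ((Y \<circ> r) k) $ i
        + snd (snd ((w \<circ> r) k)) * ((Z \<circ> r) k) $ i = 0" by simp
    qed
    ultimately have "fst l * x $ i + fst (snd l) * y $ i + snd (snd l) * z $ i = 0"
      using LIMSEQ_unique tendsto_const by metis
    thus "(fst l *s x + fst (snd l) *s y + snd (snd l) *s z) $ i = 0 $ i" by simp
  qed
  have "l \<noteq> 0" using l(1) by auto
  hence "(fst l, fst (snd l), snd (snd l)) \<noteq> (0, 0, 0)" by (cases l) (auto simp: zero_prod_def)
  thus ?thesis using eq unfolding dep3_def by blast
qed



lemma bq_factor:
  fixes h0 h1 h2 :: complex
  assumes "(h0, h1, h2) \<noteq> (0, 0, 0)"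
  shows "\<exists>p1 q1 p2 q2. (p1, q1) \<noteq> (0, 0) \<and> (p2, q2) \<noteq> (0, 0) \<and>
     (\<forall>s t. h0 * s^2 + h1 * s * t + h2 * t^2 = (p1 * s + q1 * t) * (p2 * s + q2 * t)) \<and>
     (h1^2 - 4 * h0 * h2 \<noteq> 0 \<longrightarrow> p1 * q2 - p2 * q1 \<noteq> 0)"
proof (cases "h0 = 0")
  case True
  hence "(h1, h2) \<noteq> (0, 0)" using assms by auto
  moreover have "\<forall>s t. h0 * s^2 + h1 * s * t + h2 * t^2 = (0 * s + 1 * t) * (h1 * s + h2 * t)"
    using True by (simp add: algebra_simps power2_eq_square)
  moreover have "h1^2 - 4 * h0 * h2 \<noteq> 0 \<longrightarrow> 0 * h2 - h1 * 1 \<noteq> 0" using True by simp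
  ultimately show ?thesis by (intro exI[of _ 0] exI[of _ 1] exI[of _ h1] exI[of _ h2]) simp
next
  case False
  define \<delta> where "\<delta> = csqrt (h1^2 - 4 * h0 * h2)"
  have d2: "\<delta>^2 = h1^2 - 4 * h0 * h2" unfolding \<delta>_def by simp
  have fac: "h0 * s^2 + h1 * s * t + h2 * t^2 = (h0 * s + (h1 - \<delta>) / 2 * t) * (1 * s + (h1 + \<delta>) / (2 * h0) * t)" for s t
  proof -
    have "(h0 * s + (h1 - \<delta>) / 2 * t) * (1 * s + (h1 + \<delta>) / (2 * h0) * t)
       = h0 * s^2 + h1 * s * t + (h1^2 - \<delta>^2) / (4 * h0) * t^2"
      using False by (simp add: field_simps power2_eq_square)
    also have "(h1^2 - \<delta>^2) / (4 * h0) = h2" using False d2 by (simp add: field_simps)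
    finally show ?thesis by simp
  qed
  have det: "h0 * ((h1 + \<delta>) / (2 * h0)) - 1 * ((h1 - \<delta>) / 2) = \<delta>"
    using False by (simp add: field_simps)
  have "h1^2 - 4 * h0 * h2 \<noteq> 0 \<longrightarrow> \<delta> \<noteq> 0" using d2 by auto
  thus ?thesis using False fac det
    by (intro exI[of _ h0] exI[of _ "(h1 - \<delta>) / 2"] exI[of _ 1] exI[of _ "(h1 + \<delta>) / (2 * h0)"]) simp
qed

lemma lin_zero:
  fixes p q s t :: complex
  assumes "(p, q) \<noteq> (0, 0)" "p * s + q * t = 0"
  shows "\<exists>lam. s = lam * q \<and> t = - lam * p"
proof (cases "p = 0")
  case True
  hence "q \<noteq> 0" "t = 0" using assms by auto
  thus ?thesis using True by (intro exI[of _ "s / q"]) simp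
next
  case False
  have "s = - (q * t) / p" using assms(2) False by (simp add: field_simps eq_neg_iff_add_eq_0)
  thus ?thesis using False by (intro exI[of _ "- t / p"]) (simp add: field_simps)
qed

lemma bq_root:
  fixes h0 h1 h2 :: complex
  shows "\<exists>s t. (s, t) \<noteq> (0, 0) \<and> h0 * s^2 + h1 * s * t + h2 * t^2 = 0"
proof (cases "(h0, h1, h2) = (0, 0, 0)")
  case True thus ?thesis by (intro exI[of _ 1] exI[of _ 0]) simp
next
  case False
  obtain p1 q1 p2 q2 where f: "(p1, q1) \<noteq> (0, 0)" "(p2, q2) \<noteq> (0, 0)"
     "\<forall>s t. h0 * s^2 + h1 * s * t + h2 * t^2 = (p1 * s + q1 * t) * (p2 * s + q2 * t)"
     "h1^2 - 4 * h0 * h2 \<noteq> 0 \<longrightarrow> p1 * q2 - p2 * q1 \<noteq> 0"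
    using bq_factor[OF False] by (elim exE conjE) (rule that)
  have "h0 * q1^2 + h1 * q1 * (-p1) + h2 * (-p1)^2 = (p1 * q1 + q1 * (- p1)) * (p2 * q1 + q2 * (- p1))"
    using f(3)[rule_format, of q1 "- p1"] .
  also have "\<dots> = 0" by simp
  finally have "h0 * q1^2 + h1 * q1 * (-p1) + h2 * (-p1)^2 = 0" .
  moreover have "(q1, - p1) \<noteq> (0, 0)" using f(1) by auto
  ultimately show ?thesis by (intro exI[of _ q1] exI[of _ "- p1"]) simp
qed

lemma disc_expand:
  fixes a1 b1 c1 a2 b2 c2 \<alpha> \<beta> :: complex
  shows "(\<beta> * b1 - \<alpha> * b2)^2 - 4 * (\<beta> * a1 - \<alpha> * a2) * (\<beta> * c1 - \<alpha> * c2)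
    = (b2^2 - 4 * a2 * c2) * \<alpha>^2 + (4 * (a1 * c2 + a2 * c1) - 2 * b1 * b2) * \<alpha> * \<beta> + (b1^2 - 4 * a1 * c1) * \<beta>^2"
  by (simp add: algebra_simps power2_eq_square)

lemma disc_nonzero:
  fixes a1 b1 c1 a2 b2 c2 :: complex
  assumes nz: "\<And>s t. (s, t) \<noteq> (0, 0) \<Longrightarrow>
     a1 * s^2 + b1 * s * t + c1 * t^2 \<noteq> 0 \<or> a2 * s^2 + b2 * s * t + c2 * t^2 \<noteq> 0"
  shows "(b2^2 - 4 * a2 * c2, 4 * (a1 * c2 + a2 * c1) - 2 * b1 * b2, b1^2 - 4 * a1 * c1) \<noteq> (0, 0, 0)"
proof
  assume "(b2^2 - 4 * a2 * c2, 4 * (a1 * c2 + a2 * c1) - 2 * b1 * b2, b1^2 - 4 * a1 * c1) = (0, 0, 0)"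
  hence e1: "b2^2 = 4 * a2 * c2" and e2: "4 * (a1 * c2 + a2 * c1) = 2 * b1 * b2" and e3: "b1^2 = 4 * a1 * c1"
    by simp_all
  show False
  proof (cases "a1 = 0")
    case False
    have n0: "(- b1, 2 * a1) \<noteq> (0, 0)" using False by simp
    have "a1 * (- b1)^2 + b1 * (- b1) * (2 * a1) + c1 * (2 * a1)^2 = a1 * (4 * a1 * c1 - b1^2)"
      by (simp add: algebra_simps power2_eq_square)
    hence z1: "a1 * (- b1)^2 + b1 * (- b1) * (2 * a1) + c1 * (2 * a1)^2 = 0" using e3 by simp
    have "a2 * (- b1)^2 + b2 * (- b1) * (2 * a1) + c2 * (2 * a1)^2
        = a2 * b1^2 - a1 * (2 * b1 * b2) + 4 * a1^2 * c2"
      by (simp add: algebra_simps power2_eq_square)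
    also have "\<dots> = a2 * (4 * a1 * c1) - a1 * (4 * (a1 * c2 + a2 * c1)) + 4 * a1^2 * c2"
      using e2 e3 by simp
    also have "\<dots> = 0" by (simp add: algebra_simps power2_eq_square)
    finally have z2: "a2 * (- b1)^2 + b2 * (- b1) * (2 * a1) + c2 * (2 * a1)^2 = 0" .
    from nz[OF n0] z1 z2 show False by simp
  next
    case True
    hence b1: "b1 = 0" using e3 by simp
    show False
    proof (cases "c1 = 0")
      case False
      hence "a2 = 0" using e2 True b1 by simp
      thus False using nz[of 1 0] True by simp
    next
      case c1: True
      obtain s t where st: "(s, t) \<noteq> (0, 0)" "a2 * s^2 + b2 * s * t + c2 * t^2 = 0"
        using bq_root by blast
      thus False using nz[OF st(1)] True b1 c1 by simp
    qed
  qed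
qed




lemma Phi_quad: assumes quadrics: "\<And>i. hom_poly 2 (q i)"
  shows "Phi q (s *s u + t *s v) = s^2 *s Phi q u + (s * t) *s (Phi q (u + v) - Phi q u - Phi q v) + t^2 *s Phi q v"
  by (simp add: vec_eq_iff Phi_def quad_id[OF quadrics] algebra_simps)

lemma Phi_nz: assumes "x \<noteq> 0" "x \<notin> base_locus q" shows "Phi q x \<noteq> 0"
proof -
  obtain i where "q i x \<noteq> 0" using assms unfolding base_locus_def by blast
  hence "Phi q x $ i \<noteq> 0" unfolding Phi_def by simp
  thus ?thesis by (metis zero_index)
qed

lemma span_eq_scalar: fixes x y :: "'a::field^'k" assumes "x \<noteq> 0" "y \<noteq> 0"
  shows "vec.span {x} = vec.span {y} \<longleftrightarrow> (\<exists>c. c \<noteq> 0 \<and> x = c *s y)"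
proof
  assume "vec.span {x} = vec.span {y}"
  moreover have "x \<in> vec.span {x}" by (simp add: vec.span_base)
  ultimately obtain c where c: "x = c *s y" by (auto simp: span1)
  hence "c \<noteq> 0" using assms by auto
  thus "\<exists>c. c \<noteq> 0 \<and> x = c *s y" using c by blast
next
  assume "\<exists>c. c \<noteq> 0 \<and> x = c *s y"
  then obtain c where c: "c \<noteq> 0" "x = c *s y" by blast
  show "vec.span {x} = vec.span {y}"
  proof (rule set_eqI, rule iffI)
    fix z assume "z \<in> vec.span {x}"
    then obtain d where "z = d *s x" by (auto simp: span1)
    hence "z = (d * c) *s y" using c by simp
    thus "z \<in> vec.span {y}" by (auto simp: span1)
  next
    fix z assume "z \<in> vec.span {y}"
    then obtain d where "z = d *s y" by (auto simp: span1)
    hence "z = (d / c) *s x" using c by (simp add: vec_eq_iff)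
    thus "z \<in> vec.span {x}" by (auto simp: span1)
  qed
qed

lemma indep2_coord: assumes "indep2 e1 e2" "F *s e1 + G *s e2 = F' *s e1 + G' *s e2"
  shows "F = F'" "G = G'"
proof -
  have "(F - F') *s e1 + (G - G') *s e2 = 0" using assms(2) by (simp add: vec_eq_iff algebra_simps)
  from indep2D[OF assms(1) this] show "F = F'" "G = G'" by simp_all
qed

lemma coord_span: fixes e1 e2 :: "'a::field^'k"
  assumes ind: "indep2 e1 e2" and z: "F *s e1 + G *s e2 \<noteq> 0" and y: "\<alpha> *s e1 + \<beta> *s e2 \<noteq> 0"
  shows "vec.span {F *s e1 + G *s e2} = vec.span {\<alpha> *s e1 + \<beta> *s e2} \<longleftrightarrow> \<beta> * F = \<alpha> * G"
proof
  assume "vec.span {F *s e1 + G *s e2} = vec.span {\<alpha> *s e1 + \<beta> *s e2}"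
  then obtain c where "F *s e1 + G *s e2 = c *s (\<alpha> *s e1 + \<beta> *s e2)"
    using span_eq_scalar[OF z y] by blast
  hence "F *s e1 + G *s e2 = (c * \<alpha>) *s e1 + (c * \<beta>) *s e2" by (simp add: vec_eq_iff algebra_simps)
  from indep2_coord[OF ind this] show "\<beta> * F = \<alpha> * G" by simp
next
  assume h: "\<beta> * F = \<alpha> * G"
  have ab: "\<alpha> \<noteq> 0 \<or> \<beta> \<noteq> 0" using y by auto
  obtain c where c: "F = c * \<alpha>" "G = c * \<beta>"
  proof (cases "\<alpha> = 0")
    case True
    hence "\<beta> \<noteq> 0" using ab by simp
    moreover have "F = 0" using h True \<open>\<beta> \<noteq> 0\<close> by simp
    ultimately show ?thesis using True by (intro that[of "G / \<beta>"]) simp_all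
  next
    case False
    have "G = F / \<alpha> * \<beta>" using h False by (simp add: field_simps)
    thus ?thesis using False by (intro that[of "F / \<alpha>"]) simp_all
  qed
  hence e: "F *s e1 + G *s e2 = c *s (\<alpha> *s e1 + \<beta> *s e2)" by (simp add: vec_eq_iff algebra_simps)
  hence "c \<noteq> 0" using z by auto
  thus "vec.span {F *s e1 + G *s e2} = vec.span {\<alpha> *s e1 + \<beta> *s e2}"
    using span_eq_scalar[OF z y] e by blast
qed

definition Zset :: "('m::finite \<Rightarrow> complex^'n \<Rightarrow> complex) \<Rightarrow> complex^'n \<Rightarrow> (complex^'n) set" where
  "Zset q P = {x. x \<noteq> 0 \<and> (\<forall>i j. q i x * q j P = q j x * q i P)}"

lemma fibre_sub: assumes quadrics: "\<And>i. hom_poly 2 (q i)" and P: "P \<noteq> 0" "P \<notin> base_locus q"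
  shows "fibre q P \<subseteq> Zset q P"
proof -
  let ?F = "{f. \<exists>i j. f = (\<lambda>x. q j P * q i x + (- q i P) * q j x)}"
  have cl: "zariski_closed (Zset q P)"
    unfolding zariski_closed_def
  proof (intro exI[of _ ?F] conjI)
    show "\<forall>f\<in>?F. \<exists>d. hom_poly d f"
    proof
      fix f assume "f \<in> ?F"
      then obtain i j where f: "f = (\<lambda>x. q j P * q i x + (- q i P) * q j x)" by blast
      show "\<exists>d. hom_poly d f" unfolding f by (rule exI, rule hom_lin[OF quadrics quadrics])
    qed
    show "Zset q P = {x. x \<noteq> 0 \<and> (\<forall>f\<in>?F. f x = 0)}"
    proof (rule set_eqI, rule iffI)
      fix x assume "x \<in> Zset q P"
      hence x: "x \<noteq> 0" "\<And>i j. q i x * q j P = q j x * q i P" unfolding Zset_def by auto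
      have "\<forall>f\<in>?F. f x = 0"
      proof
        fix f assume "f \<in> ?F"
        then obtain i j where "f = (\<lambda>x. q j P * q i x + (- q i P) * q j x)" by blast
        thus "f x = 0" using x(2)[of i j] by (simp add: algebra_simps)
      qed
      thus "x \<in> {x. x \<noteq> 0 \<and> (\<forall>f\<in>?F. f x = 0)}" using x(1) by simp
    next
      fix x assume "x \<in> {x. x \<noteq> 0 \<and> (\<forall>f\<in>?F. f x = 0)}"
      hence x: "x \<noteq> 0" "\<forall>f\<in>?F. f x = 0" by auto
      have "q i x * q j P = q j x * q i P" for i j
      proof -
        have "(\<lambda>x. q j P * q i x + (- q i P) * q j x) \<in> ?F" by blast
        from bspec[OF x(2) this] have "q j P * q i x + (- q i P) * q j x = 0" by simp
        thus ?thesis by (simp add: algebra_simps)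
      qed
      thus "x \<in> Zset q P" using x(1) unfolding Zset_def by simp
    qed
  qed
  have sub: "{Q. Q \<noteq> 0 \<and> Q \<notin> base_locus q \<and> vec.span {Phi q Q} = vec.span {Phi q P}} \<subseteq> Zset q P"
  proof
    fix Q assume "Q \<in> {Q. Q \<noteq> 0 \<and> Q \<notin> base_locus q \<and> vec.span {Phi q Q} = vec.span {Phi q P}}"
    hence Q: "Q \<noteq> 0" "Q \<notin> base_locus q" "vec.span {Phi q Q} = vec.span {Phi q P}" by auto
    then obtain c where "Phi q Q = c *s Phi q P"
      using span_eq_scalar[OF Phi_nz[OF Q(1,2)] Phi_nz[OF P]] by blast
    hence "\<And>i. q i Q = c * q i P" by (simp add: vec_eq_iff Phi_def)
    thus "Q \<in> Zset q P" using Q(1) unfolding Zset_def by simp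
  qed
  show ?thesis unfolding fibre_def zariski_closure_def by (rule Inter_lower) (use cl sub in simp)
qed

lemma Zset_scalar: assumes "Phi q P \<noteq> 0" "x \<in> Zset q P" shows "\<exists>k. Phi q x = k *s Phi q P"
proof -
  have "\<exists>j. Phi q P $ j \<noteq> 0" using assms(1) by (simp add: vec_eq_iff)
  then obtain j where "Phi q P $ j \<noteq> 0" by blast
  hence j: "q j P \<noteq> 0" by (simp add: Phi_def)
  have qi: "q i x = q j x / q j P * q i P" for i
  proof -
    have "q i x * q j P = q j x * q i P" using assms(2) unfolding Zset_def by blast
    thus ?thesis using j by (simp add: field_simps)
  qed
  have "Phi q x $ i = ((q j x / q j P) *s Phi q P) $ i" for i using qi[of i] by (simp add: Phi_def)
  hence "Phi q x = (q j x / q j P) *s Phi q P" by (simp add: vec_eq_iff)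
  thus ?thesis by blast
qed




lemma ex3I: "(a, b, c) \<noteq> (0, 0, 0) \<Longrightarrow> a * x1 + b * y1 + c * z1 = 0 \<Longrightarrow> a * x2 + b * y2 + c * z2 = 0 \<Longrightarrow>
   \<exists>a b c. (a, b, c) \<noteq> (0, 0, 0) \<and> a * x1 + b * y1 + c * z1 = 0 \<and> a * x2 + b * y2 + c * z2 = (0::complex)"
  by blast

lemma scal3: fixes x1 x2 y1 y2 z1 z2 :: complex
  shows "\<exists>a b c. (a, b, c) \<noteq> (0, 0, 0) \<and> a * x1 + b * y1 + c * z1 = 0 \<and> a * x2 + b * y2 + c * z2 = 0"
proof (cases "x1 * y2 - x2 * y1 = 0")
  case False
  have e1: "(y1 * z2 - y2 * z1) * x1 + (z1 * x2 - z2 * x1) * y1 + (x1 * y2 - x2 * y1) * z1 = 0"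
    by (simp add: algebra_simps)
  have e2: "(y1 * z2 - y2 * z1) * x2 + (z1 * x2 - z2 * x1) * y2 + (x1 * y2 - x2 * y1) * z2 = 0"
    by (simp add: algebra_simps)
  have "(y1 * z2 - y2 * z1, z1 * x2 - z2 * x1, x1 * y2 - x2 * y1) \<noteq> (0, 0, 0)" using False by simp
  from ex3I[OF this e1 e2] show ?thesis .
next
  case d: True
  show ?thesis
  proof (cases "x1 = 0")
    case False
    have e1: "(- y1) * x1 + x1 * y1 + 0 * z1 = 0" by simp
    have "(- y1) * x2 + x1 * y2 + 0 * z2 = x1 * y2 - x2 * y1" by (simp add: algebra_simps)
    hence e2: "(- y1) * x2 + x1 * y2 + 0 * z2 = 0" using d by simp
    have "(- y1, x1, 0) \<noteq> (0, 0, 0::complex)" using False by simp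
    from ex3I[OF this e1 e2] show ?thesis .
  next
    case x1: True
    show ?thesis
    proof (cases "x2 = 0")
      case False
      have "x2 * y1 = 0" using d x1 by simp
      hence e1: "(- y2) * x1 + x2 * y1 + 0 * z1 = 0" using x1 by simp
      have e2: "(- y2) * x2 + x2 * y2 + 0 * z2 = 0" by simp
      have "(- y2, x2, 0) \<noteq> (0, 0, 0::complex)" using False by simp
      from ex3I[OF this e1 e2] show ?thesis .
    next
      case True
      have e1: "1 * x1 + 0 * y1 + 0 * z1 = 0" using x1 by simp
      have e2: "1 * x2 + 0 * y2 + 0 * z2 = 0" using True by simp
      have "(1::complex, 0::complex, 0::complex) \<noteq> (0, 0, 0)" by simp
      from ex3I[OF this e1 e2] show ?thesis .
    qed
  qed
qed

lemma dep3_span2: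
  assumes "x = x1 *s w1 + x2 *s w2" "y = y1 *s w1 + y2 *s w2" "z = z1 *s w1 + z2 *s w2"
  shows "dep3 x y z"
proof -
  obtain a b c where abc: "(a, b, c) \<noteq> (0, 0, 0)" "a * x1 + b * y1 + c * z1 = 0" "a * x2 + b * y2 + c * z2 = 0"
    using scal3[of x1 y1 z1 x2 y2 z2] by (elim exE conjE) (rule that)
  have "a *s x + b *s y + c *s z = (a * x1 + b * y1 + c * z1) *s w1 + (a * x2 + b * y2 + c * z2) *s w2"
    unfolding assms by (simp add: vec_eq_iff algebra_simps)
  also have "\<dots> = 0" unfolding abc(2) abc(3) by simp
  finally have "a *s x + b *s y + c *s z = 0" .
  thus ?thesis unfolding dep3_def using abc(1) by blast
qed

lemma Phi_tendsto: assumes quadrics: "\<And>i. hom_poly 2 (q i)" and a: "a \<longlonglongrightarrow> u"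
  shows "(\<lambda>k. Phi q (a k)) \<longlonglongrightarrow> Phi q u"
  unfolding Phi_def by (intro tendsto_vec_lambda hom_tendsto[OF quadrics a])

lemma secant_dep:
  assumes quadrics: "\<And>i. hom_poly 2 (q i)" and P: "P \<noteq> 0" "P \<notin> base_locus q"
    and sec: "secant_line (fibre q P) L"
  shows "\<exists>u v. L = vec.span {u, v} \<and> indep2 u v \<and> dep3 (Phi q u) (Phi q v) (Phi q (u + v))"
proof -
  obtain u v pp qq a b where S: "L = vec.span {u, v}" "vec.dim L = 2"
    "\<And>k. pp k \<in> fibre q P \<and> qq k \<in> fibre q P \<and> vec.dim (vec.span {pp k, qq k}) = 2 \<and>
         a k \<in> vec.span {pp k, qq k} \<and> b k \<in> vec.span {pp k, qq k}"
    "a \<longlonglongrightarrow> u" "b \<longlonglongrightarrow> v"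
    using sec unfolding secant_line_def by blast
  have ind: "indep2 u v" using S(1,2) dim2_indep2 by blast
  have PP: "Phi q P \<noteq> 0" using Phi_nz[OF P] .
  have dk: "dep3 (Phi q (a k)) (Phi q (b k)) (Phi q (a k + b k))" for k
  proof -
    have z1: "pp k \<in> Zset q P" and z2: "qq k \<in> Zset q P" using S(3)[of k] fibre_sub[OF quadrics P] by auto
    obtain \<kappa> where k1: "Phi q (pp k) = \<kappa> *s Phi q P" using Zset_scalar[OF PP z1] by blast
    obtain \<kappa>' where k2: "Phi q (qq k) = \<kappa>' *s Phi q P" using Zset_scalar[OF PP z2] by blast
    note kk = k1 k2
    define Bk where "Bk = Phi q (pp k + qq k) - Phi q (pp k) - Phi q (qq k)"
    have rep: "\<exists>\<alpha> \<beta>. Phi q x = \<alpha> *s Phi q P + \<beta> *s Bk" if xin: "x \<in> vec.span {pp k, qq k}" for x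
    proof -
      obtain s t where x: "x = s *s pp k + t *s qq k" using xin unfolding span2 by blast
      have "Phi q x = s^2 *s Phi q (pp k) + (s * t) *s Bk + t^2 *s Phi q (qq k)"
        unfolding x Bk_def by (rule Phi_quad[OF quadrics])
      also have "\<dots> = (s^2 * \<kappa> + t^2 * \<kappa>') *s Phi q P + (s * t) *s Bk"
        unfolding kk by (simp add: vec_eq_iff algebra_simps)
      finally show ?thesis by blast
    qed
    have ab: "a k + b k \<in> vec.span {pp k, qq k}" using S(3)[of k] by (simp add: vec.span_add)
    have ak: "a k \<in> vec.span {pp k, qq k}" and bk: "b k \<in> vec.span {pp k, qq k}" using S(3)[of k] by auto
    obtain x1 x2 where "Phi q (a k) = x1 *s Phi q P + x2 *s Bk" using rep[OF ak] by blast
    moreover obtain y1 y2 where "Phi q (b k) = y1 *s Phi q P + y2 *s Bk" using rep[OF bk] by blast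
    moreover obtain z1 z2 where "Phi q (a k + b k) = z1 *s Phi q P + z2 *s Bk" using rep[OF ab] by blast
    ultimately show ?thesis by (rule dep3_span2)
  qed
  have "dep3 (Phi q u) (Phi q v) (Phi q (u + v))"
    by (rule dep3_limit[of "\<lambda>k. Phi q (a k)" "\<lambda>k. Phi q (b k)" "\<lambda>k. Phi q (a k + b k)", OF dk],
        rule Phi_tendsto[OF quadrics S(4)], rule Phi_tendsto[OF quadrics S(5)],
        rule Phi_tendsto[OF quadrics tendsto_add[OF S(4) S(5)]])
  thus ?thesis using S(1) ind by blast
qed




context
  fixes q :: "'m::finite \<Rightarrow> complex^'n::finite \<Rightarrow> complex" and L :: "(complex^'n) set"
    and u v :: "complex^'n" and e1 e2 :: "complex^'m" and a1 b1 c1 a2 b2 c2 :: complex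
  assumes ind: "indep2 u v" and Ldef: "L = vec.span {u, v}" and disj: "L \<inter> base_locus q = {}"
    and ind_e: "indep2 e1 e2"
    and PhFG: "\<And>s t. Phi q (s *s u + t *s v) = (a1 * s^2 + b1 * s * t + c1 * t^2) *s e1 + (a2 * s^2 + b2 * s * t + c2 * t^2) *s e2"
begin

lemma L_elem: "x \<in> L \<longleftrightarrow> (\<exists>s t. x = s *s u + t *s v)"
  unfolding Ldef span2 by blast

lemma uv_nz: "(s, t) \<noteq> (0, 0) \<Longrightarrow> s *s u + t *s v \<noteq> 0"
  using indep2D[OF ind, of s t] by auto

lemma uv_zero: "s *s u + t *s v \<noteq> 0 \<Longrightarrow> (s, t) \<noteq> (0, 0)"
  by auto

lemma Phi_L_nz: assumes "(s, t) \<noteq> (0, 0)" shows "Phi q (s *s u + t *s v) \<noteq> 0"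
proof -
  have "s *s u + t *s v \<in> L" using L_elem by blast
  hence "s *s u + t *s v \<notin> base_locus q" using disj by blast
  thus ?thesis using Phi_nz uv_nz[OF assms] by blast
qed

lemma nzFG: assumes "(s, t) \<noteq> (0, 0)"
  shows "a1 * s^2 + b1 * s * t + c1 * t^2 \<noteq> 0 \<or> a2 * s^2 + b2 * s * t + c2 * t^2 \<noteq> 0"
proof (rule ccontr)
  assume "\<not> ?thesis"
  hence F0: "a1 * s^2 + b1 * s * t + c1 * t^2 = 0" and G0: "a2 * s^2 + b2 * s * t + c2 * t^2 = 0" by auto
  have "Phi q (s *s u + t *s v) = (a1 * s^2 + b1 * s * t + c1 * t^2) *s e1 + (a2 * s^2 + b2 * s * t + c2 * t^2) *s e2"
    by (rule PhFG)
  also have "\<dots> = 0 *s e1 + 0 *s e2" by (simp only: F0 G0)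
  also have "\<dots> = 0" by simp
  finally show False using Phi_L_nz[OF assms] by blast
qed

lemma H_iff: assumes st: "(s, t) \<noteq> (0, 0)" and y: "\<alpha> *s e1 + \<beta> *s e2 \<noteq> 0"
  shows "vec.span {Phi q (s *s u + t *s v)} = vec.span {\<alpha> *s e1 + \<beta> *s e2} \<longleftrightarrow>
    (\<beta> * a1 - \<alpha> * a2) * s^2 + (\<beta> * b1 - \<alpha> * b2) * s * t + (\<beta> * c1 - \<alpha> * c2) * t^2 = 0"
proof -
  have nz: "(a1 * s^2 + b1 * s * t + c1 * t^2) *s e1 + (a2 * s^2 + b2 * s * t + c2 * t^2) *s e2 \<noteq> 0"
    using Phi_L_nz[OF st] unfolding PhFG .
  have "(\<beta> * a1 - \<alpha> * a2) * s^2 + (\<beta> * b1 - \<alpha> * b2) * s * t + (\<beta> * c1 - \<alpha> * c2) * t^2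
     = \<beta> * (a1 * s^2 + b1 * s * t + c1 * t^2) - \<alpha> * (a2 * s^2 + b2 * s * t + c2 * t^2)"
    by (simp add: algebra_simps)
  thus ?thesis unfolding PhFG coord_span[OF ind_e nz y] by simp
qed

lemma W_elem: "y \<in> vec.span {e1, e2} \<longleftrightarrow> (\<exists>\<alpha> \<beta>. y = \<alpha> *s e1 + \<beta> *s e2)"
  unfolding span2 by blast

lemma img_eq: "{vec.span {Phi q x} | x. x \<in> L \<and> x \<noteq> 0} = {vec.span {y} | y. y \<in> vec.span {e1, e2} \<and> y \<noteq> 0}"
proof (rule set_eqI, rule iffI)
  fix Y assume "Y \<in> {vec.span {Phi q x} | x. x \<in> L \<and> x \<noteq> 0}"
  then obtain x where x: "Y = vec.span {Phi q x}" "x \<in> L" "x \<noteq> 0" by blast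
  then obtain s t where st: "x = s *s u + t *s v" using L_elem by blast
  have st0: "(s, t) \<noteq> (0, 0)" using x(3) st by auto
  have "Phi q x \<in> vec.span {e1, e2}" unfolding st PhFG W_elem by blast
  moreover have "Phi q x \<noteq> 0" unfolding st using Phi_L_nz[OF st0] .
  ultimately show "Y \<in> {vec.span {y} | y. y \<in> vec.span {e1, e2} \<and> y \<noteq> 0}" using x(1) by blast
next
  fix Y assume "Y \<in> {vec.span {y} | y. y \<in> vec.span {e1, e2} \<and> y \<noteq> 0}"
  then obtain y where y: "Y = vec.span {y}" "y \<in> vec.span {e1, e2}" "y \<noteq> 0" by blast
  then obtain \<alpha> \<beta> where ab: "y = \<alpha> *s e1 + \<beta> *s e2" using W_elem by blast
  obtain s t where st: "(s, t) \<noteq> (0, 0)"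
    "(\<beta> * a1 - \<alpha> * a2) * s^2 + (\<beta> * b1 - \<alpha> * b2) * s * t + (\<beta> * c1 - \<alpha> * c2) * t^2 = 0"
    using bq_root by blast
  have "vec.span {Phi q (s *s u + t *s v)} = Y"
    unfolding y(1) ab using H_iff[OF st(1)] y(3) st(2) ab by blast
  moreover have "s *s u + t *s v \<in> L" "s *s u + t *s v \<noteq> 0" using L_elem uv_nz[OF st(1)] by blast+
  ultimately show "Y \<in> {vec.span {Phi q x} | x. x \<in> L \<and> x \<noteq> 0}" by blast
qed


lemma line_zero_span:
  fixes V1 V2 :: "complex^'k"
  assumes indV: "indep2 V1 V2" and pq: "(p, qq) \<noteq> (0, 0)" and l: "p * s + qq * t = 0" and st: "(s, t) \<noteq> (0, 0)"
  shows "vec.span {s *s V1 + t *s V2} = vec.span {qq *s V1 + (- p) *s V2}"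
proof -
  obtain lam where lam: "s = lam * qq" "t = - lam * p" using lin_zero[OF pq l] by blast
  have lam0: "lam \<noteq> 0" using st lam by auto
  have e: "s *s V1 + t *s V2 = lam *s (qq *s V1 + (- p) *s V2)" unfolding lam by (simp add: vec_eq_iff algebra_simps)
  have n1: "s *s V1 + t *s V2 \<noteq> 0" using indep2D[OF indV, of s t] st by auto
  have n2: "qq *s V1 + (- p) *s V2 \<noteq> 0" using indep2D[OF indV, of qq "- p"] pq by auto
  show ?thesis using span_eq_scalar[OF n1 n2] e lam0 by blast
qed

lemma card2:
  assumes y: "\<alpha> *s e1 + \<beta> *s e2 \<noteq> 0"
    and D: "(b2^2 - 4 * a2 * c2) * \<alpha>^2 + (4 * (a1 * c2 + a2 * c1) - 2 * b1 * b2) * \<alpha> * \<beta> + (b1^2 - 4 * a1 * c1) * \<beta>^2 \<noteq> 0"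
  shows "card {vec.span {x} | x. x \<in> L \<and> x \<noteq> 0 \<and> vec.span {Phi q x} = vec.span {\<alpha> *s e1 + \<beta> *s e2}} = 2"
proof -
  define h0 h1 h2 where "h0 = \<beta> * a1 - \<alpha> * a2" "h1 = \<beta> * b1 - \<alpha> * b2" "h2 = \<beta> * c1 - \<alpha> * c2"
  have disc: "h1^2 - 4 * h0 * h2 \<noteq> 0" unfolding h0_h1_h2_def disc_expand using D .
  hence h: "(h0, h1, h2) \<noteq> (0, 0, 0)" by auto
  obtain pa qa pb qb where f: "(pa, qa) \<noteq> (0, 0)" "(pb, qb) \<noteq> (0, 0)"
     "\<forall>s t. h0 * s^2 + h1 * s * t + h2 * t^2 = (pa * s + qa * t) * (pb * s + qb * t)"
     "h1^2 - 4 * h0 * h2 \<noteq> 0 \<longrightarrow> pa * qb - pb * qa \<noteq> 0"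
    using bq_factor[OF h] by (elim exE conjE) (rule that)
  have det: "pa * qb - pb * qa \<noteq> 0" using f(4) disc by blast
  define w1 where "w1 = qa *s u + (- pa) *s v"
  define w2 where "w2 = qb *s u + (- pb) *s v"
  have Hi: "vec.span {Phi q (s *s u + t *s v)} = vec.span {\<alpha> *s e1 + \<beta> *s e2} \<longleftrightarrow>
      (pa * s + qa * t) * (pb * s + qb * t) = 0" if "(s, t) \<noteq> (0, 0)" for s t
    using H_iff[OF that y] f(3) unfolding h0_h1_h2_def by simp
  let ?fib = "{vec.span {x} | x. x \<in> L \<and> x \<noteq> 0 \<and> vec.span {Phi q x} = vec.span {\<alpha> *s e1 + \<beta> *s e2}}"
  have w1in: "vec.span {w1} \<in> ?fib"
  proof -
    have st: "(qa, - pa) \<noteq> (0, 0)" using f(1) by auto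
    have "(pa * qa + qa * (- pa)) * (pb * qa + qb * (- pa)) = 0" by simp
    hence "vec.span {Phi q w1} = vec.span {\<alpha> *s e1 + \<beta> *s e2}" unfolding w1_def using Hi[OF st] by blast
    moreover have "w1 \<in> L" unfolding w1_def L_elem by blast
    moreover have "w1 \<noteq> 0" unfolding w1_def by (rule uv_nz[OF st])
    ultimately show ?thesis by blast
  qed
  have w2in: "vec.span {w2} \<in> ?fib"
  proof -
    have st: "(qb, - pb) \<noteq> (0, 0)" using f(2) by auto
    have "(pa * qb + qa * (- pb)) * (pb * qb + qb * (- pb)) = 0" by simp
    hence "vec.span {Phi q w2} = vec.span {\<alpha> *s e1 + \<beta> *s e2}" unfolding w2_def using Hi[OF st] by blast
    moreover have "w2 \<in> L" unfolding w2_def L_elem by blast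
    moreover have "w2 \<noteq> 0" unfolding w2_def by (rule uv_nz[OF st])
    ultimately show ?thesis by blast
  qed
  have sub: "?fib \<subseteq> {vec.span {w1}, vec.span {w2}}"
  proof
    fix Z assume "Z \<in> ?fib"
    then obtain x where x: "Z = vec.span {x}" "x \<in> L" "x \<noteq> 0"
      "vec.span {Phi q x} = vec.span {\<alpha> *s e1 + \<beta> *s e2}" by blast
    obtain s t where st: "x = s *s u + t *s v" using x(2) L_elem by blast
    have st0: "(s, t) \<noteq> (0, 0)" using x(3) st by auto
    have "(pa * s + qa * t) * (pb * s + qb * t) = 0" using Hi[OF st0] x(4) st by simp
    hence "pa * s + qa * t = 0 \<or> pb * s + qb * t = 0" by simp
    thus "Z \<in> {vec.span {w1}, vec.span {w2}}"
    proof
      assume "pa * s + qa * t = 0"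
      hence "Z = vec.span {w1}" unfolding x(1) st w1_def by (rule line_zero_span[OF ind f(1) _ st0])
      thus ?thesis by simp
    next
      assume "pb * s + qb * t = 0"
      hence "Z = vec.span {w2}" unfolding x(1) st w2_def by (rule line_zero_span[OF ind f(2) _ st0])
      thus ?thesis by simp
    qed
  qed
  have eq: "?fib = {vec.span {w1}, vec.span {w2}}" using sub w1in w2in by blast
  have ne: "vec.span {w1} \<noteq> vec.span {w2}"
  proof
    assume "vec.span {w1} = vec.span {w2}"
    moreover have "(qa, - pa) \<noteq> (0, 0)" using f(1) by auto
    hence n1: "qa *s u + (- pa) *s v \<noteq> 0" by (rule uv_nz)
    moreover have "(qb, - pb) \<noteq> (0, 0)" using f(2) by auto
    hence n2: "qb *s u + (- pb) *s v \<noteq> 0" by (rule uv_nz)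
    ultimately have "(- pb) * qa = qb * (- pa)" unfolding w1_def w2_def using coord_span[OF ind n1 n2] by blast
    hence "pa * qb - pb * qa = 0" by (simp add: algebra_simps)
    thus False using det by simp
  qed
  show ?thesis unfolding eq using ne by simp
qed

lemma double_cover: "double_cover_of_line q L"
proof -
  let ?img = "{vec.span {Phi q x} | x. x \<in> L \<and> x \<noteq> 0}"
  let ?fib = "\<lambda>y. {vec.span {x} | x. x \<in> L \<and> x \<noteq> 0 \<and> vec.span {Phi q x} = y}"
  have pl: "proj_line (vec.span {e1, e2})" unfolding proj_line_def using indep2_dim[OF ind_e] by simp
  define d0 d1 d2 where "d0 = b2^2 - 4 * a2 * c2" "d1 = 4 * (a1 * c2 + a2 * c1) - 2 * b1 * b2" "d2 = b1^2 - 4 * a1 * c1"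
  have dnz: "(d0, d1, d2) \<noteq> (0, 0, 0)" unfolding d0_d1_d2_def by (rule disc_nonzero) (rule nzFG)
  obtain r1 s1 r2 s2 where f: "(r1, s1) \<noteq> (0, 0)" "(r2, s2) \<noteq> (0, 0)"
     "\<forall>s t. d0 * s^2 + d1 * s * t + d2 * t^2 = (r1 * s + s1 * t) * (r2 * s + s2 * t)"
     "d1^2 - 4 * d0 * d2 \<noteq> 0 \<longrightarrow> r1 * s2 - r2 * s1 \<noteq> 0"
    using bq_factor[OF dnz] by (elim exE conjE) (rule that)
  have bad: "{Y \<in> ?img. card (?fib Y) \<noteq> 2} \<subseteq> {vec.span {s1 *s e1 + (- r1) *s e2}, vec.span {s2 *s e1 + (- r2) *s e2}}"
  proof
    fix Y assume "Y \<in> {Y \<in> ?img. card (?fib Y) \<noteq> 2}"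
    hence Y: "Y \<in> ?img" "card (?fib Y) \<noteq> 2" by auto
    then obtain y where y: "Y = vec.span {y}" "y \<in> vec.span {e1, e2}" "y \<noteq> 0" unfolding img_eq by blast
    then obtain \<alpha> \<beta> where ab: "y = \<alpha> *s e1 + \<beta> *s e2" using W_elem by blast
    have ab0: "(\<alpha>, \<beta>) \<noteq> (0, 0)" using y(3) ab by auto
    have "d0 * \<alpha>^2 + d1 * \<alpha> * \<beta> + d2 * \<beta>^2 = 0"
    proof (rule ccontr)
      assume "d0 * \<alpha>^2 + d1 * \<alpha> * \<beta> + d2 * \<beta>^2 \<noteq> 0"
      from card2[OF y(3)[unfolded ab] this[unfolded d0_d1_d2_def]] Y(2) y(1) ab show False by simp
    qed
    hence "(r1 * \<alpha> + s1 * \<beta>) * (r2 * \<alpha> + s2 * \<beta>) = 0" using f(3) by simp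
    hence "r1 * \<alpha> + s1 * \<beta> = 0 \<or> r2 * \<alpha> + s2 * \<beta> = 0" by simp
    thus "Y \<in> {vec.span {s1 *s e1 + (- r1) *s e2}, vec.span {s2 *s e1 + (- r2) *s e2}}"
    proof
      assume "r1 * \<alpha> + s1 * \<beta> = 0"
      hence "Y = vec.span {s1 *s e1 + (- r1) *s e2}" unfolding y(1) ab by (rule line_zero_span[OF ind_e f(1) _ ab0])
      thus ?thesis by simp
    next
      assume "r2 * \<alpha> + s2 * \<beta> = 0"
      hence "Y = vec.span {s2 *s e1 + (- r2) *s e2}" unfolding y(1) ab by (rule line_zero_span[OF ind_e f(2) _ ab0])
      thus ?thesis by simp
    qed
  qed
  have fin: "finite {Y \<in> ?img. card (?fib Y) \<noteq> 2}" by (rule finite_subset[OF bad]) simp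
  show ?thesis unfolding double_cover_of_line_def Let_def
    using pl img_eq fin by blast
qed

end






lemma notin_indep: fixes A x :: "complex^'m" assumes A0: "A \<noteq> 0" and nk: "\<And>k. x \<noteq> k *s A"
  shows "indep2 A x"
  unfolding indep2_def
proof (intro allI impI)
  fix a b assume h: "a *s A + b *s x = 0"
  have h': "\<And>i. b * x$i + a * A$i = 0"
  proof -
    fix i have "(a *s A + b *s x) $ i = 0" using h by simp
    thus "b * x$i + a * A$i = 0" by (simp add: add.commute)
  qed
  have b0: "b = 0"
  proof (rule ccontr)
    assume "b \<noteq> 0"
    from lin_dep_coef[OF h' this] nk show False by blast
  qed
  hence aA: "a *s A = 0" using h by simp
  have "a = 0"
  proof (rule ccontr)
    assume a: "a \<noteq> 0"
    have "A = (1 / a) *s (a *s A)" using a by (simp add: vec_eq_iff)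
    thus False using aA A0 by simp
  qed
  thus "a = 0 \<and> b = 0" using b0 by simp
qed

lemma basis_from_dep3:
  fixes A B C :: "complex^'m"
  assumes A0: "A \<noteq> 0" and dep: "dep3 A B C"
    and nz: "\<And>s t. (s, t) \<noteq> (0, 0) \<Longrightarrow> s^2 *s A + (s * t) *s B + t^2 *s C \<noteq> 0"
  shows "\<exists>e1 e2 a1 a2 b1 b2 c1 c2. indep2 e1 e2 \<and> A = a1 *s e1 + a2 *s e2 \<and>
           B = b1 *s e1 + b2 *s e2 \<and> C = c1 *s e1 + c2 *s e2"
proof (cases "\<forall>k. B \<noteq> k *s A")
  case True
  have iAB: "indep2 A B" using notin_indep[OF A0] True by blast
  obtain a b c where abc: "(a, b, c) \<noteq> (0, 0, 0)" "a *s A + b *s B + c *s C = 0"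
    using dep unfolding dep3_def by blast
  have c0: "c \<noteq> 0"
  proof
    assume "c = 0"
    hence "a *s A + b *s B = 0" using abc(2) by simp
    from indep2D[OF iAB this] abc(1) \<open>c = 0\<close> show False by simp
  qed
  have "C = (- a / c) *s A + (- b / c) *s B"
  proof -
    have "c * C $ i = - (a * A $ i + b * B $ i)" for i
    proof -
      have "(a *s A + b *s B + c *s C) $ i = 0" using abc(2) by simp
      thus ?thesis by (simp add: algebra_simps eq_neg_iff_add_eq_0)
    qed
    thus ?thesis using c0 by (simp add: vec_eq_iff field_simps)
  qed
  moreover have "A = 1 *s A + 0 *s B" "B = 0 *s A + 1 *s B" by simp_all
  ultimately show ?thesis using iAB by blast
next
  case False
  then obtain \<beta> where B: "B = \<beta> *s A" by blast
  show ?thesis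
  proof (cases "\<forall>k. C \<noteq> k *s A")
    case True
    have iAC: "indep2 A C" using notin_indep[OF A0] True by blast
    have "A = 1 *s A + 0 *s C" "B = \<beta> *s A + 0 *s C" "C = 0 *s A + 1 *s C" using B by simp_all
    thus ?thesis using iAC by blast
  next
    case False
    then obtain \<gamma> where C: "C = \<gamma> *s A" by blast
    obtain s t where st: "(s, t) \<noteq> (0, 0)" "1 * s^2 + \<beta> * s * t + \<gamma> * t^2 = 0"
      using bq_root by blast
    have "s^2 *s A + (s * t) *s B + t^2 *s C = (1 * s^2 + \<beta> * s * t + \<gamma> * t^2) *s A"
      unfolding B C by (simp add: vec_eq_iff algebra_simps)
    also have "\<dots> = 0" unfolding st(2) by simp
    finally show ?thesis using nz[OF st(1)] by blast
  qed
qed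

lemma R_to_dc:
  fixes q :: "'m::finite \<Rightarrow> complex^'n::finite \<Rightarrow> complex"
  assumes quadrics: "\<And>i. hom_poly 2 (q i)" and ind: "indep2 u v" and Ldef: "L = vec.span {u, v}"
    and disj: "L \<inter> base_locus q = {}" and dep: "dep3 (Phi q u) (Phi q v) (Phi q (u + v))"
  shows "double_cover_of_line q L"
proof -
  define A where "A = Phi q u"
  define C where "C = Phi q v"
  define B where "B = Phi q (u + v) - A - C"
  have Ph: "Phi q (s *s u + t *s v) = s^2 *s A + (s * t) *s B + t^2 *s C" for s t
    unfolding A_def B_def C_def by (rule Phi_quad[OF quadrics])
  have nz: "s^2 *s A + (s * t) *s B + t^2 *s C \<noteq> 0" if st: "(s, t) \<noteq> (0, 0)" for s t
  proof -
    have x0: "s *s u + t *s v \<noteq> 0" using indep2D[OF ind, of s t] st by auto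
    have "s *s u + t *s v \<in> L" unfolding Ldef span2 by blast
    hence "s *s u + t *s v \<notin> base_locus q" using disj by blast
    from Phi_nz[OF x0 this] show ?thesis unfolding Ph .
  qed
  have A0: "A \<noteq> 0" using nz[of 1 0] by simp
  have dABC: "dep3 A B C"
  proof -
    obtain a b c where abc: "(a, b, c) \<noteq> (0, 0, 0)" "a *s A + b *s C + c *s Phi q (u + v) = 0"
      using dep unfolding dep3_def A_def C_def by blast
    have "(a + c) *s A + c *s B + (b + c) *s C = a *s A + b *s C + c *s Phi q (u + v)"
      unfolding B_def by (simp add: vec_eq_iff algebra_simps)
    also have "\<dots> = 0" by (rule abc(2))
    finally have "(a + c) *s A + c *s B + (b + c) *s C = 0" .
    moreover have "(a + c, c, b + c) \<noteq> (0, 0, 0)" using abc(1) by auto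
    ultimately show ?thesis unfolding dep3_def by blast
  qed
  obtain e1 e2 a1 a2 b1 b2 c1 c2 where bs: "indep2 e1 e2" "A = a1 *s e1 + a2 *s e2"
    "B = b1 *s e1 + b2 *s e2" "C = c1 *s e1 + c2 *s e2"
    using basis_from_dep3[OF A0 dABC nz] by blast
  have PhFG: "Phi q (s *s u + t *s v) = (a1 * s^2 + b1 * s * t + c1 * t^2) *s e1 + (a2 * s^2 + b2 * s * t + c2 * t^2) *s e2" for s t
    unfolding Ph bs(2-4) by (simp add: vec_eq_iff algebra_simps)
  show ?thesis by (rule double_cover[OF ind Ldef disj bs(1) PhFG])
qed


lemma span_ne_indep2: fixes x1 x2 :: "complex^'n" assumes "x1 \<noteq> 0" "x2 \<noteq> 0" "vec.span {x1} \<noteq> vec.span {x2}"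
  shows "indep2 x1 x2"
  unfolding indep2_def
proof (intro allI impI)
  fix a b assume h: "a *s x1 + b *s x2 = 0"
  have h': "\<And>i. a * x1$i + b * x2$i = 0"
  proof -
    fix i have "(a *s x1 + b *s x2) $ i = 0" using h by simp
    thus "a * x1$i + b * x2$i = 0" by simp
  qed
  have a0: "a = 0"
  proof (rule ccontr)
    assume a: "a \<noteq> 0"
    have e: "x1 = (- b / a) *s x2" by (rule lin_dep_coef[OF h' a])
    hence "- b / a \<noteq> 0" using assms(1) by auto
    thus False using span_eq_scalar[OF assms(1,2)] e assms(3) by blast
  qed
  hence bx: "b *s x2 = 0" using h by simp
  have "b = 0"
  proof (rule ccontr)
    assume b: "b \<noteq> 0"
    have "x2 = (1 / b) *s (b *s x2)" using b by (simp add: vec_eq_iff)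
    thus False using bx assms(2) by simp
  qed
  thus "a = 0 \<and> b = 0" using a0 by simp
qed

lemma dc_to_R:
  fixes q :: "'m::finite \<Rightarrow> complex^'n::finite \<Rightarrow> complex"
  assumes quadrics: "\<And>i. hom_poly 2 (q i)" and line: "proj_line L"
    and disj: "L \<inter> base_locus q = {}" and dc: "double_cover_of_line q L"
  shows "\<exists>P. P \<noteq> 0 \<and> P \<notin> base_locus q \<and> \<not> linear_cone (fibre q P) \<and> secant_line (fibre q P) L"
proof -
  let ?img = "{vec.span {Phi q x} | x. x \<in> L \<and> x \<noteq> 0}"
  let ?fib = "\<lambda>y. {vec.span {x} | x. x \<in> L \<and> x \<noteq> 0 \<and> vec.span {Phi q x} = y}"
  have dc': "(\<exists>W. proj_line W \<and> ?img = {vec.span {y} | y. y \<in> W \<and> y \<noteq> 0}) \<and>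
      finite {Y \<in> ?img. card (?fib Y) \<noteq> 2}"
    using dc unfolding double_cover_of_line_def Let_def .
  hence fin: "finite {Y \<in> ?img. card (?fib Y) \<noteq> 2}" by (rule conjunct2)
  from dc' obtain W where W: "proj_line W" "?img = {vec.span {y} | y. y \<in> W \<and> y \<noteq> 0}"
    by (elim conjE exE) (rule that)
  have subL: "vec.subspace L" and dimL: "vec.dim L = 2" using line unfolding proj_line_def by auto
  have subW: "vec.subspace W" and dimW: "vec.dim W = 2" using W(1) unfolding proj_line_def by auto
  obtain Bs where Bs: "Bs \<subseteq> W" "vec.independent Bs" "W \<subseteq> vec.span Bs" "card Bs = vec.dim W"
    using vec.basis_exists by blast
  have "card Bs = 2" using Bs(4) dimW by simp
  then obtain w1 w2 where w: "Bs = {w1, w2}" "w1 \<noteq> w2" unfolding card_2_iff by blast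
  have iw: "indep2 w1 w2"
    by (rule dim2_indep2) (use vec.dim_span_eq_card_independent[OF Bs(2)] Bs(4) dimW w in simp)
  have w12: "w1 \<in> W" "w2 \<in> W" using Bs(1) w(1) by auto
  define f where "f n = vec.span {1 *s w1 + of_nat n *s w2}" for n :: nat
  have fin_img: "infinite ?img"
  proof -
    have "range f \<subseteq> ?img"
    proof
      fix Y assume "Y \<in> range f"
      then obtain n where n: "Y = f n" by blast
      have "1 *s w1 + of_nat n *s w2 \<in> W"
        using w12 subW by (intro vec.subspace_add vec.subspace_scale) auto
      moreover have "1 *s w1 + of_nat n *s w2 \<noteq> (0::complex^'m)"
      proof
        assume "1 *s w1 + of_nat n *s w2 = (0::complex^'m)"
        from indep2D[OF iw this] show False by simp
      qed
      ultimately show "Y \<in> ?img" unfolding W(2) n f_def by blast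
    qed
    moreover have "inj f"
    proof (rule injI)
      fix n m assume e: "f n = f m"
      have n0: "1 *s w1 + of_nat n *s w2 \<noteq> (0::complex^'m)"
      proof
        assume "1 *s w1 + of_nat n *s w2 = (0::complex^'m)"
        from indep2D[OF iw this] show False by simp
      qed
      have m0: "1 *s w1 + of_nat m *s w2 \<noteq> (0::complex^'m)"
      proof
        assume "1 *s w1 + of_nat m *s w2 = (0::complex^'m)"
        from indep2D[OF iw this] show False by simp
      qed
      have "vec.span {1 *s w1 + of_nat n *s w2} = vec.span {1 *s w1 + of_nat m *s w2}" using e unfolding f_def .
      from iffD1[OF coord_span[OF iw n0 m0] this] have "(of_nat m :: complex) * 1 = 1 * of_nat n" .
      thus "n = m" by simp
    qed
    ultimately show ?thesis using infinite_super range_inj_infinite by blast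
  qed
  have "\<exists>Y\<in>?img. card (?fib Y) = 2"
  proof (rule ccontr)
    assume "\<not> (\<exists>Y\<in>?img. card (?fib Y) = 2)"
    hence nE: "\<And>Y. Y \<in> ?img \<Longrightarrow> card (?fib Y) \<noteq> 2" by blast
    have "?img \<subseteq> {Y \<in> ?img. card (?fib Y) \<noteq> 2}"
    proof (rule subsetI)
      fix Y assume h: "Y \<in> ?img"
      from conjI[OF h nE[OF h]] show "Y \<in> {Y \<in> ?img. card (?fib Y) \<noteq> 2}" by (rule CollectI)
    qed
    from finite_subset[OF this fin] fin_img show False by blast
  qed
  then obtain Y where Y: "Y \<in> ?img" "card (?fib Y) = 2" by blast
  obtain S1 S2 where S: "?fib Y = {S1, S2}" "S1 \<noteq> S2" using Y(2) unfolding card_2_iff by blast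
  have "S1 \<in> ?fib Y" using S(1) by blast
  then obtain x1 where x1: "S1 = vec.span {x1}" "x1 \<in> L" "x1 \<noteq> 0" "vec.span {Phi q x1} = Y" by blast
  have "S2 \<in> ?fib Y" using S(1) by blast
  then obtain x2 where x2: "S2 = vec.span {x2}" "x2 \<in> L" "x2 \<noteq> 0" "vec.span {Phi q x2} = Y" by blast
  have nb1: "x1 \<notin> base_locus q" using disj x1(2) by blast
  have nb2: "x2 \<notin> base_locus q" using disj x2(2) by blast
  have P1: "Phi q x1 \<noteq> 0" by (rule Phi_nz[OF x1(3) nb1])
  have ix: "indep2 x1 x2" using span_ne_indep2[OF x1(3) x2(3)] S(2) x1(1) x2(1) by simp
  have dimx: "vec.dim (vec.span {x1, x2}) = 2" by (rule indep2_dim[OF ix])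
  have Lx: "vec.span {x1, x2} = L"
  proof (rule vec.subspace_dim_equal)
    show "vec.subspace (vec.span {x1, x2})" by simp
    show "vec.subspace L" by (rule subL)
    show "vec.span {x1, x2} \<subseteq> L" using x1(2) x2(2) subL by (intro vec.span_minimal) auto
    show "vec.dim L \<le> vec.dim (vec.span {x1, x2})" using dimx dimL by simp
  qed
  let ?S0 = "{Q. Q \<noteq> 0 \<and> Q \<notin> base_locus q \<and> vec.span {Phi q Q} = vec.span {Phi q x1}}"
  have S0F: "?S0 \<subseteq> fibre q x1" unfolding fibre_def zariski_closure_def by (rule Inter_greatest) blast
  have x1F: "x1 \<in> fibre q x1" using S0F x1(3) nb1 by blast
  have x2F: "x2 \<in> fibre q x1" using S0F x2(3) nb2 x1(4) x2(4) by blast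
  have sec: "secant_line (fibre q x1) L"
    unfolding secant_line_def
    apply (rule exI[of _ x1], rule exI[of _ x2], rule exI[of _ "\<lambda>k. x1"], rule exI[of _ "\<lambda>k. x2"],
           rule exI[of _ "\<lambda>k. x1"], rule exI[of _ "\<lambda>k. x2"])
    using Lx dimL x1F x2F dimx x1(2) x2(2) by (simp add: vec.span_base)
  have nonlin: "\<not> linear_cone (fibre q x1)"
  proof
    assume "linear_cone (fibre q x1)"
    hence sub: "vec.subspace (insert 0 (fibre q x1))" unfolding linear_cone_def .
    have "L \<subseteq> insert 0 (fibre q x1)" unfolding Lx[symmetric] using x1F x2F
      by (intro vec.span_minimal[OF _ sub]) auto
    have "?img \<subseteq> {vec.span {Phi q x1}}"
    proof
      fix Z assume "Z \<in> ?img"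
      then obtain x where x: "Z = vec.span {Phi q x}" "x \<in> L" "x \<noteq> 0" by blast
      have "x \<in> fibre q x1" using x(2,3) \<open>L \<subseteq> insert 0 (fibre q x1)\<close> by blast
      hence "x \<in> Zset q x1" using fibre_sub[OF quadrics x1(3) nb1] by blast
      then obtain k where k: "Phi q x = k *s Phi q x1" using Zset_scalar[OF P1] by blast
      have Px: "Phi q x \<noteq> 0" using Phi_nz[OF x(3)] disj x(2) by blast
      hence "k \<noteq> 0" using k by auto
      hence "vec.span {Phi q x} = vec.span {Phi q x1}" using span_eq_scalar[OF Px P1] k by blast
      thus "Z \<in> {vec.span {Phi q x1}}" using x(1) by simp
    qed
    hence "finite ?img" by (rule finite_subset) simp
    thus False using fin_img by blast
  qed
  show ?thesis using x1(3) nb1 nonlin sec by blast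
qed

theorem lemma4p2:
  fixes q :: "'m::finite \<Rightarrow> complex^'n::finite \<Rightarrow> complex"
    and L :: "(complex^'n) set"
  assumes quadrics: "\<And>i. hom_poly 2 (q i)"
    and indep: "\<And>c. (\<forall>x. (\<Sum>i\<in>UNIV. c i * q i x) = 0) \<Longrightarrow> (\<forall>i. c i = 0)"
    and line: "proj_line L"
    and disj: "L \<inter> base_locus q = {}"
  shows "double_cover_of_line q L \<longleftrightarrow>
    (\<exists>P. P \<noteq> 0 \<and> P \<notin> base_locus q \<and> \<not> linear_cone (fibre q P) \<and>
         secant_line (fibre q P) L)"
proof
  assume "double_cover_of_line q L"
  thus "\<exists>P. P \<noteq> 0 \<and> P \<notin> base_locus q \<and> \<not> linear_cone (fibre q P) \<and> secant_line (fibre q P) L"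
    by (rule dc_to_R[OF quadrics line disj])
next
  assume "\<exists>P. P \<noteq> 0 \<and> P \<notin> base_locus q \<and> \<not> linear_cone (fibre q P) \<and> secant_line (fibre q P) L"
  then obtain P where P: "P \<noteq> 0" "P \<notin> base_locus q" "secant_line (fibre q P) L" by blast
  obtain u v where uv: "L = vec.span {u, v}" "indep2 u v" "dep3 (Phi q u) (Phi q v) (Phi q (u + v))"
    using secant_dep[OF quadrics P] by blast
  show "double_cover_of_line q L" by (rule R_to_dc[OF quadrics uv(2) uv(1) disj uv(3)])
qed


end
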